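(* Let $k\ge2$ and let $G=F_k$ be the free group of rank $k$, presented as $G=\langle S_{2k}\mid K\rangle$ with $S_{2k}=\{s_1,\dots,s_{2k}\}$ and $K(s_i,s_j)=0$ if and only if $|i-j|=k$. Let $\mathcal{A}$ be a finite alphabet, $A$ a $\{0,1\}$-matrix indexed by $\mathcal{A}$, and $X=X_{\mathbf{A},\mathbf{A}^t}$ the Markov tree shift on $F_k$ given by the $2k$-tuple $(A_1,\dots,A_k,A_1^t,\dots,A_k^t)$ with $A_1=\cdots=A_k=A$. Then the limit $\lim_{n\to\infty}\log p_n/|\Delta_n|$ exists and equals $h^{(s)}(X)$.
   Context: For a $\{0,1\}$-matrix $K$ indexed by generators $S=\{s_1,\dots,s_N\}$, $\langle S\mid K\rangle$ is the semigroup generated by $S$ with relations $s_is_j=1_G$ iff $K(s_i,s_j)=0$; here this is $F_k$ with $s_{i+k}=s_i^{-1}$. Every $g$ has a unique minimal (reduced) word $g=g_1\cdots g_n$, $|g|=n$. $\Delta_n=\{h\in G:|h|\le n\}$ and $\bar{\Delta}^{(g)}_n=\{gh:|h|\le n,\ |gh|=|g|+|h|\}$. A pattern $u:H\to\mathcal{A}$ ($H$ finite) is accepted by $t\in\mathcal{A}^G$ if there is $g$ with $t_{gh}=u_h$ for all $h\in H$; $p_n$ (resp. $p^{(g)}_n$) is the number of patterns on $\Delta_n$ (resp. $\bar{\Delta}^{(g)}_n$) accepted by some $t\in X$. For an $N$-tuple $(B_1,\dots,B_N)$ of $\{0,1\}$-matrices indexed by $\mathcal{A}$ the Markov tree shift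 is $\{t\in\mathcal{A}^G: B_i(t_g,t_{gs_i})=1 \text{ whenever } |gs_i|=|g|+1\}$. $A^t$ is the transpose. The $i$th stem entropy is $h^{(s_i)}(X)=\limsup_n\log p^{(s_i)}_n/|\bar{\Delta}^{(s_i)}_n|$; these coincide (as $K$ is primitive for $k\ge2$) and $h^{(s)}(X)$ is their common value. *)

theory Defs
  imports Complex_Main "HOL-Library.Extended_Real" "HOL-Library.Liminf_Limsup"
begin

text \<open>Free group F_k presented as the semigroup generated by s_0,...,s_{2k-1}
  (0-based: paper's s_{i+1} is index i) with s_i s_j = 1 iff K(s_i,s_j)=0 iff |i-j|=k.
  Group elements are the reduced (minimal) words.\<close>

definition Kmat :: "nat \<Rightarrow> nat \<Rightarrow> nat \<Rightarrow> bool" where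
  "Kmat k i j \<longleftrightarrow> \<not> (i = j + k \<or> j = i + k)"

definition reduced :: "nat \<Rightarrow> nat list \<Rightarrow> bool" where
  "reduced k w \<longleftrightarrow> set w \<subseteq> {..<2*k} \<and>
     (\<forall>i. Suc i < length w \<longrightarrow> Kmat k (w ! i) (w ! Suc i))"

definition FG :: "nat \<Rightarrow> nat list set" where
  "FG k = {w. reduced k w}"

definition app1 :: "nat \<Rightarrow> nat list \<Rightarrow> nat \<Rightarrow> nat list" where
  "app1 k g x = (if g \<noteq> [] \<and> \<not> Kmat k (last g) x then butlast g else g @ [x])"

text \<open>Group product of reduced words: the reduced form of the concatenation.\<close>
definition fmult :: "nat \<Rightarrow> nat list \<Rightarrow> nat list \<Rightarrow> nat list" where
  "fmult k g h = foldl (app1 k) g h"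

definition Delta :: "nat \<Rightarrow> nat \<Rightarrow> nat list set" where
  "Delta k n = {h \<in> FG k. length h \<le> n}"

definition Delta_bar :: "nat \<Rightarrow> nat list \<Rightarrow> nat \<Rightarrow> nat list set" where
  "Delta_bar k g n = {fmult k g h | h. h \<in> FG k \<and> length h \<le> n \<and>
                         length (fmult k g h) = length g + length h}"

text \<open>Markov tree shift given by an N-tuple (B_0,...,B_{N-1}) of 0-1 matrices (as relations).\<close>
definition markov_tree_shift :: "nat \<Rightarrow> (nat \<Rightarrow> 'a \<Rightarrow> 'a \<Rightarrow> bool) \<Rightarrow> (nat list \<Rightarrow> 'a) set" where
  "markov_tree_shift k B = {t. \<forall>g\<in>FG k. \<forall>i<2*k.
      length (fmult k g [i]) = length g + 1 \<longrightarrow> B i (t g) (t (fmult k g [i]))}"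

definition accepts :: "nat \<Rightarrow> (nat list \<Rightarrow> 'a) \<Rightarrow> nat list set \<Rightarrow> (nat list \<Rightarrow> 'a) \<Rightarrow> bool" where
  "accepts k t H u \<longleftrightarrow> (\<exists>g\<in>FG k. \<forall>h\<in>H. t (fmult k g h) = u h)"

text \<open>Number of patterns on H accepted by some t in X (patterns are functions on H,
  extended by undefined outside H).\<close>
definition pcount :: "nat \<Rightarrow> (nat list \<Rightarrow> 'a) set \<Rightarrow> nat list set \<Rightarrow> nat" where
  "pcount k X H = card {u. (\<forall>h. h \<notin> H \<longrightarrow> u h = undefined) \<and> (\<exists>t\<in>X. accepts k t H u)}"

text \<open>The i-th stem entropy (generator s_i given by the one-letter word [i]).\<close>
definition stem_entropy :: "nat \<Rightarrow> (nat list \<Rightarrow> 'a) set \<Rightarrow> nat \<Rightarrow> ereal" where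
  "stem_entropy k X i = limsup (\<lambda>n. ereal (ln (real (pcount k X (Delta_bar k [i] n)))
                                          / real (card (Delta_bar k [i] n))))"

definition AAt :: "nat \<Rightarrow> ('a \<Rightarrow> 'a \<Rightarrow> bool) \<Rightarrow> nat \<Rightarrow> 'a \<Rightarrow> 'a \<Rightarrow> bool" where
  "AAt k A i = (if i < k then A else (\<lambda>a b. A b a))"

end

theory Submission
  imports Defs "HOL-Library.FuncSet"
begin

lemma reduced_succ: "reduced k w \<longleftrightarrow> set w \<subseteq> {..<2*k} \<and> successively (Kmat k) w"
  unfolding reduced_def successively_conv_nth by auto

lemma reduced_Nil[simp]: "reduced k []" by (simp add: reduced_succ)

lemma reduced_snoc: "reduced k (w @ [j]) \<longleftrightarrow> reduced k w \<and> j < 2*k \<and> (w = [] \<or> Kmat k (last w) j)"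
  by (auto simp: reduced_succ successively_append_iff)

lemma reduced_append: "reduced k (v @ w) \<Longrightarrow> reduced k v \<and> reduced k w"
  by (auto simp: reduced_succ successively_append_iff)

lemma reduced_Cons2: "reduced k (x # y # w) \<longleftrightarrow> x < 2*k \<and> Kmat k x y \<and> reduced k (y # w)"
  by (auto simp: reduced_succ)

lemma reduced_single[simp]: "reduced k [x] \<longleftrightarrow> x < 2*k"
  by (auto simp: reduced_succ)

lemma reduced_butlast: "reduced k w \<Longrightarrow> reduced k (butlast w)"
  by (metis append_butlast_last_id butlast.simps(1) reduced_append)

lemma app1_reduced: "reduced k g \<Longrightarrow> j < 2*k \<Longrightarrow> reduced k (app1 k g j)"
  unfolding app1_def by (auto simp: reduced_snoc reduced_butlast)

lemma fmult_snoc: "fmult k g (h @ [j]) = app1 k (fmult k g h) j"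
  by (simp add: fmult_def)

lemma fmult_Cons: "fmult k g (x # h) = fmult k (app1 k g x) h"
  by (simp add: fmult_def)

lemma fmult_Nil[simp]: "fmult k g [] = g"
  by (simp add: fmult_def)

lemma fmult_reduced: "reduced k g \<Longrightarrow> reduced k h \<Longrightarrow> reduced k (fmult k g h)"
proof (induction h rule: rev_induct)
  case Nil then show ?case by simp
next
  case (snoc x xs)
  then show ?case using reduced_append[of k xs "[x]"]
    by (auto simp: fmult_snoc intro!: app1_reduced)
qed

lemma fmult_app: "reduced k (g @ h) \<Longrightarrow> fmult k g h = g @ h"
proof (induction h rule: rev_induct)
  case Nil then show ?case by simp
next
  case (snoc x xs)
  have r: "reduced k (g @ xs)" using snoc.prems reduced_append[of k "g@xs" "[x]"] by simp
  have "g @ xs = [] \<or> Kmat k (last (g @ xs)) x" using snoc.prems reduced_snoc[of k "g@xs" x] by simp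
  then show ?case using snoc.IH[OF r] by (auto simp: fmult_snoc app1_def)
qed

lemma fmult_Nil_left: "reduced k h \<Longrightarrow> fmult k [] h = h"
  using fmult_app[of k "[]" h] by simp

lemma app1_length: "length (app1 k g x) \<le> length g + 1"
  by (auto simp: app1_def)

lemma fmult_length: "length (fmult k g h) \<le> length g + length h"
proof (induction h rule: rev_induct)
  case Nil then show ?case by simp
next
  case (snoc x xs)
  then show ?case using app1_length[of k "fmult k g xs" x] by (simp add: fmult_snoc)
qed

lemma fmult_single: "fmult k g [i] = app1 k g i"
  by (simp add: fmult_def)


definition TT :: "nat \<Rightarrow> nat list \<Rightarrow> nat \<Rightarrow> nat list set" where
  "TT k w n = {w @ h | h. length h \<le> n \<and> reduced k (w @ h)}"

lemma Delta_eq: "Delta k n = TT k [] n"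
  unfolding Delta_def TT_def FG_def by auto

lemma Delta_bar_eq:
  assumes "i < 2*k"
  shows "Delta_bar k [i] n = TT k [i] n"
proof
  show "Delta_bar k [i] n \<subseteq> TT k [i] n"
  proof
    fix x assume "x \<in> Delta_bar k [i] n"
    then obtain h where x: "x = fmult k [i] h" and h: "reduced k h" "length h \<le> n"
      and l: "length (fmult k [i] h) = 1 + length h"
      unfolding Delta_bar_def FG_def by auto
    have red: "reduced k ([i] @ h)"
    proof (cases h)
      case Nil then show ?thesis using assms by simp
    next
      case (Cons h0 h')
      show ?thesis
      proof (cases "Kmat k i h0")
        case True
        then show ?thesis using h Cons assms by (simp add: reduced_Cons2)
      next
        case False
        then have "app1 k [i] h0 = []" by (simp add: app1_def)
        then have "fmult k [i] h = fmult k [] h'" using Cons by (simp add: fmult_Cons)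
        then have "length (fmult k [i] h) \<le> length h'" using fmult_length[of k "[]" h'] by simp
        then show ?thesis using l Cons by simp
      qed
    qed
    then show "x \<in> TT k [i] n" using x h fmult_app[OF red] unfolding TT_def by auto
  qed
next
  show "TT k [i] n \<subseteq> Delta_bar k [i] n"
  proof
    fix x assume "x \<in> TT k [i] n"
    then obtain h where x: "x = [i] @ h" "length h \<le> n" "reduced k ([i] @ h)"
      unfolding TT_def by auto
    then have "reduced k h" using reduced_append by blast
    then have "x = fmult k [i] h \<and> h \<in> FG k \<and> length h \<le> n \<and>
                         length (fmult k [i] h) = length [i] + length h"
      using x fmult_app[OF x(3)] by (simp add: FG_def)
    then show "x \<in> Delta_bar k [i] n" unfolding Delta_bar_def by blast
  qed
qed

locale fs =
  fixes k :: nat and A :: "'a::finite \<Rightarrow> 'a \<Rightarrow> bool"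
  assumes k2: "2 \<le> k"
begin

abbreviation B where "B \<equiv> AAt k A"

definition Xs where "Xs = markov_tree_shift k (AAt k A)"

definition inv :: "nat \<Rightarrow> nat" where "inv j = (if j < k then j + k else j - k)"

lemma Kmat_inv: "i < 2*k \<Longrightarrow> j < 2*k \<Longrightarrow> Kmat k i j \<longleftrightarrow> j \<noteq> inv i"
  unfolding Kmat_def inv_def by auto

lemma B_inv: "j < 2*k \<Longrightarrow> B (inv j) a b = B j b a"
  unfolding inv_def AAt_def by auto

lemma inv_lt: "j < 2*k \<Longrightarrow> inv j < 2*k"
  unfolding inv_def by auto

lemma X_char: "t \<in> Xs \<longleftrightarrow> (\<forall>w j. reduced k (w @ [j]) \<longrightarrow> B j (t w) (t (w @ [j])))"
proof -
  have *: "(length (fmult k g [i]) = length g + 1) \<longleftrightarrow> (g = [] \<or> Kmat k (last g) i)" for g i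
    by (auto simp: fmult_single app1_def)
  have **: "(g = [] \<or> Kmat k (last g) i) \<Longrightarrow> fmult k g [i] = g @ [i]" for g i
    by (auto simp: fmult_single app1_def)
  show ?thesis
    unfolding Xs_def markov_tree_shift_def FG_def mem_Collect_eq
  proof safe
    fix w j assume h: "\<forall>g\<in>{w. reduced k w}. \<forall>i<2 * k. length (fmult k g [i]) = length g + 1 \<longrightarrow>
             B i (t g) (t (fmult k g [i]))" and r: "reduced k (w @ [j])"
    then have "reduced k w" "j < 2*k" "w = [] \<or> Kmat k (last w) j" by (auto simp: reduced_snoc)
    then show "B j (t w) (t (w @ [j]))" using h * ** by (metis One_nat_def add.commute add_Suc_shift mem_Collect_eq)
  next
    fix g i assume h: "\<forall>w j. reduced k (w @ [j]) \<longrightarrow> B j (t w) (t (w @ [j]))"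
      and g: "reduced k g" and i: "i < 2*k" and l: "length (fmult k g [i]) = length g + 1"
    have c: "g = [] \<or> Kmat k (last g) i" using * l by blast
    then have "reduced k (g @ [i])" using g i by (simp add: reduced_snoc)
    then show "B i (t g) (t (fmult k g [i]))" using h ** c by metis
  qed
qed

lemma last_inv:
  assumes "reduced k z" "z \<noteq> []" "j < 2*k" "\<not> Kmat k (last z) j"
  shows "z = butlast z @ [inv j]"
proof -
  have "last z \<in> set z" using assms(2) by simp
  then have "last z < 2*k" using assms(1) by (auto simp: reduced_succ)
  then have "last z = inv j" using assms unfolding Kmat_def inv_def by auto
  then show ?thesis using assms(2) by (metis append_butlast_last_id)
qed

lemma shift:
  assumes t: "t \<in> Xs" and g: "reduced k g"
  shows "(\<lambda>w. t (fmult k g w)) \<in> Xs"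
  unfolding X_char
proof (intro allI impI)
  fix w j assume r: "reduced k (w @ [j])"
  then have w: "reduced k w" and j: "j < 2*k" by (auto simp: reduced_snoc)
  define z where "z = fmult k g w"
  have z: "reduced k z" using fmult_reduced[OF g w] z_def by simp
  have e: "fmult k g (w @ [j]) = app1 k z j" by (simp add: fmult_snoc z_def)
  show "B j (t (fmult k g w)) (t (fmult k g (w @ [j])))"
  proof (cases "z = [] \<or> Kmat k (last z) j")
    case True
    then have "app1 k z j = z @ [j]" by (auto simp: app1_def)
    moreover have "reduced k (z @ [j])" using True z j by (simp add: reduced_snoc)
    ultimately show ?thesis using t e z_def unfolding X_char by auto
  next
    case False
    then have a: "app1 k z j = butlast z" by (auto simp: app1_def)
    have zz: "z = butlast z @ [inv j]" using last_inv[OF z _ j] False by auto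
    have "reduced k (butlast z @ [inv j])" using zz z by simp
    then have "B (inv j) (t (butlast z)) (t z)" using t zz unfolding X_char by metis
    then show ?thesis using B_inv[OF j] a e z_def by simp
  qed
qed

definition E where "E = {t [] | t. t \<in> Xs}"

lemma label_E: "t \<in> Xs \<Longrightarrow> reduced k w \<Longrightarrow> t w \<in> E"
proof -
  assume t: "t \<in> Xs" and w: "reduced k w"
  have "(\<lambda>v. t (fmult k w v)) \<in> Xs" using shift[OF t w] .
  then show "t w \<in> E" unfolding E_def by (intro CollectI exI[of _ "\<lambda>v. t (fmult k w v)"]) simp
qed

lemma E_out: assumes "a \<in> E" "j < 2*k" shows "\<exists>b\<in>E. B j a b"
proof -
  obtain t where t: "t \<in> Xs" "a = t []" using assms unfolding E_def by auto
  have "reduced k ([] @ [j])" using assms by simp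
  then have "B j (t []) (t [j])" using t unfolding X_char by fastforce
  moreover have "t [j] \<in> E" using label_E[OF t(1)] assms by simp
  ultimately show ?thesis using t by auto
qed

lemma E_in: assumes "a \<in> E" "j < 2*k" shows "\<exists>b\<in>E. B j b a"
  using E_out[OF assms(1) inv_lt[OF assms(2)]] B_inv[OF assms(2)] by auto

definition res :: "(nat list \<Rightarrow> 'a) \<Rightarrow> nat list set \<Rightarrow> nat list \<Rightarrow> 'a" where
  "res t R = (\<lambda>w. if w \<in> R then t w else undefined)"

definition V :: "nat list set \<Rightarrow> (nat list \<Rightarrow> 'a) set" where
  "V R = {f. (\<forall>w. w \<notin> R \<longrightarrow> f w = undefined) \<and> (\<forall>w\<in>R. f w \<in> E) \<and>
            (\<forall>w j. w \<in> R \<longrightarrow> w @ [j] \<in> R \<longrightarrow> B j (f w) (f (w @ [j])))}"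

lemma pcount_res:
  assumes "R \<subseteq> FG k"
  shows "pcount k Xs R = card {res t R | t. t \<in> Xs}"
proof -
  have "{u. (\<forall>h. h \<notin> R \<longrightarrow> u h = undefined) \<and> (\<exists>t\<in>Xs. accepts k t R u)} = {res t R | t. t \<in> Xs}"
  proof safe
    fix u t assume u: "\<forall>h. h \<notin> R \<longrightarrow> u h = undefined" and t: "t \<in> Xs" and a: "accepts k t R u"
    obtain g where g: "g \<in> FG k" "\<forall>h\<in>R. t (fmult k g h) = u h" using a unfolding accepts_def by auto
    have "(\<lambda>w. t (fmult k g w)) \<in> Xs" using shift[OF t] g(1) by (simp add: FG_def)
    moreover have "u = res (\<lambda>w. t (fmult k g w)) R" using u g(2) by (auto simp: res_def)
    ultimately show "\<exists>t'. u = res t' R \<and> t' \<in> Xs" by blast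
  next
    fix t h assume "t \<in> Xs" "h \<notin> R" then show "res t R h = undefined" by (simp add: res_def)
  next
    fix t assume t: "t \<in> Xs"
    have "[] \<in> FG k" by (simp add: FG_def)
    moreover have "\<forall>h\<in>R. t (fmult k [] h) = res t R h"
      using assms fmult_Nil_left by (auto simp: res_def FG_def)
    ultimately show "\<exists>t'\<in>Xs. accepts k t' R (res t R)" using t unfolding accepts_def by blast
  qed
  then show ?thesis unfolding pcount_def by simp
qed

lemma res_V: "R \<subseteq> FG k \<Longrightarrow> t \<in> Xs \<Longrightarrow> res t R \<in> V R"
  unfolding V_def res_def using label_E X_char by (auto simp: FG_def)

definition chs :: "nat \<Rightarrow> 'a \<Rightarrow> 'a" where "chs j a = (SOME b. b \<in> E \<and> B j a b)"

lemma chs: "a \<in> E \<Longrightarrow> j < 2*k \<Longrightarrow> chs j a \<in> E \<and> B j a (chs j a)"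
  unfolding chs_def using E_out by (metis (mono_tags, lifting) someI_ex)

primrec extr :: "nat list set \<Rightarrow> (nat list \<Rightarrow> 'a) \<Rightarrow> 'a \<Rightarrow> nat list \<Rightarrow> 'a" where
  "extr R f c0 [] = (if [] \<in> R then f [] else c0)"
| "extr R f c0 (x # xs) = (if rev (x # xs) \<in> R then f (rev (x # xs)) else chs x (extr R f c0 xs))"

lemma extr_E: "f \<in> V R \<Longrightarrow> c0 \<in> E \<Longrightarrow> set xs \<subseteq> {..<2*k} \<Longrightarrow> extr R f c0 xs \<in> E"
  by (induction xs) (auto simp: V_def chs)

lemma extension:
  assumes R: "R \<subseteq> FG k" and f: "f \<in> V R" and c0: "c0 \<in> E"
    and hyp: "\<And>v j. v @ [j] \<in> R \<Longrightarrow> v \<notin> R \<Longrightarrow> v = [] \<and> B j c0 (f [j])"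
  shows "(\<lambda>w. extr R f c0 (rev w)) \<in> Xs \<and> res (\<lambda>w. extr R f c0 (rev w)) R = f"
proof
  show "(\<lambda>w. extr R f c0 (rev w)) \<in> Xs"
    unfolding X_char
  proof (intro allI impI)
    fix w j assume r: "reduced k (w @ [j])"
    then have w: "reduced k w" and j: "j < 2*k" by (auto simp: reduced_snoc)
    have wE: "extr R f c0 (rev w) \<in> E" using extr_E[OF f c0] w by (auto simp: reduced_succ)
    show "B j (extr R f c0 (rev w)) (extr R f c0 (rev (w @ [j])))"
    proof (cases "w @ [j] \<in> R")
      case False
      then show ?thesis using chs[OF wE j] by simp
    next
      case True
      show ?thesis
      proof (cases "w \<in> R")
        case True
        have "extr R f c0 (rev w) = f w"
          using True by (cases "rev w") auto
        then show ?thesis using \<open>w @ [j] \<in> R\<close> True f unfolding V_def by auto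
      next
        case False
        then have "w = []" "B j c0 (f [j])" using hyp[OF \<open>w @ [j] \<in> R\<close>] by auto
        then show ?thesis using False \<open>w @ [j] \<in> R\<close> by simp
      qed
    qed
  qed
next
  show "res (\<lambda>w. extr R f c0 (rev w)) R = f"
  proof
    fix w show "res (\<lambda>w. extr R f c0 (rev w)) R w = f w"
    proof (cases "w \<in> R")
      case True then show ?thesis by (cases "rev w") (auto simp: res_def)
    next
      case False then show ?thesis using f by (auto simp: res_def V_def)
    qed
  qed
qed

end

lemma card_fibers:
  assumes "finite S" "finite F"
  shows "card {x\<in>S. g x \<in> F} = (\<Sum>b\<in>F. card {x\<in>S. g x = b})"
proof -
  have "{x\<in>S. g x \<in> F} = (\<Union>b\<in>F. {x\<in>S. g x = b})" by auto
  moreover have "card (\<Union>b\<in>F. {x\<in>S. g x = b}) = (\<Sum>b\<in>F. card {x\<in>S. g x = b})"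
    using assms by (intro card_UN_disjoint) auto
  ultimately show ?thesis by simp
qed

lemma TT_mem: "v \<in> TT k w n \<longleftrightarrow> reduced k v \<and> (\<exists>h. v = w @ h \<and> length h \<le> n)"
  unfolding TT_def by auto

lemma TT_FG: "TT k w n \<subseteq> FG k"
  unfolding TT_def FG_def by auto

lemma TT_finite: "finite (TT k w n)"
proof -
  have "TT k w n \<subseteq> {xs. set xs \<subseteq> {..<2*k} \<and> length xs \<le> length w + n}"
    unfolding TT_def by (auto simp: reduced_succ)
  moreover have "finite {xs. set xs \<subseteq> {..<2*k} \<and> length xs \<le> length w + n}"
    by (rule finite_lists_length_le) simp
  ultimately show ?thesis by (rule finite_subset)
qed

definition CC :: "nat \<Rightarrow> nat list \<Rightarrow> nat set" where
  "CC k w = {j. j < 2*k \<and> reduced k (w @ [j])}"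

lemma CC_finite: "finite (CC k w)"
  unfolding CC_def by auto

lemma TT_0: "reduced k w \<Longrightarrow> TT k w 0 = {w}"
  unfolding TT_def by auto

lemma TT_Suc_mem:
  assumes "reduced k w"
  shows "v \<in> TT k w (Suc n) \<longleftrightarrow> v = w \<or> (\<exists>j\<in>CC k w. v \<in> TT k (w @ [j]) n)"
proof
  assume "v \<in> TT k w (Suc n)"
  then obtain h where v: "reduced k v" "v = w @ h" "length h \<le> Suc n" by (auto simp: TT_mem)
  show "v = w \<or> (\<exists>j\<in>CC k w. v \<in> TT k (w @ [j]) n)"
  proof (cases h)
    case Nil then show ?thesis using v by simp
  next
    case (Cons j h')
    have "reduced k (w @ [j])" using v Cons reduced_append[of k "w @ [j]" h'] by simp
    then have "j \<in> CC k w" by (simp add: CC_def reduced_snoc)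
    moreover have "v \<in> TT k (w @ [j]) n" using v Cons by (simp add: TT_mem)
    ultimately show ?thesis by blast
  qed
next
  assume "v = w \<or> (\<exists>j\<in>CC k w. v \<in> TT k (w @ [j]) n)"
  then show "v \<in> TT k w (Suc n)"
  proof
    assume "v = w" then show ?thesis using assms by (auto simp: TT_mem intro: exI[of _ "[]"])
  next
    assume "\<exists>j\<in>CC k w. v \<in> TT k (w @ [j]) n"
    then obtain j h where "reduced k v" "v = w @ [j] @ h" "length h \<le> n" by (auto simp: TT_mem)
    then show ?thesis by (auto simp: TT_mem intro!: exI[of _ "[j] @ h"])
  qed
qed

lemma TT_child_idx: "v \<in> TT k (w @ [j]) n \<Longrightarrow> v ! length w = j \<and> length w < length v"
  by (auto simp: TT_mem nth_append)

lemma TT_Suc_eq: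
  assumes "reduced k w"
  shows "TT k w (Suc n) = insert w (\<Union>j\<in>CC k w. TT k (w @ [j]) n)"
  using TT_Suc_mem[OF assms] by auto

lemma card_TT_Suc:
  assumes "reduced k w"
  shows "card (TT k w (Suc n)) = 1 + (\<Sum>j\<in>CC k w. card (TT k (w @ [j]) n))"
proof -
  have "w \<notin> (\<Union>j\<in>CC k w. TT k (w @ [j]) n)" using TT_child_idx by blast
  moreover have "card (\<Union>j\<in>CC k w. TT k (w @ [j]) n) = (\<Sum>j\<in>CC k w. card (TT k (w @ [j]) n))"
  proof (rule card_UN_disjoint)
    show "\<forall>i\<in>CC k w. \<forall>j\<in>CC k w. i \<noteq> j \<longrightarrow> TT k (w @ [i]) n \<inter> TT k (w @ [j]) n = {}"
      using TT_child_idx by blast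
  qed (auto simp: CC_finite TT_finite)
  moreover have "finite (\<Union>j\<in>CC k w. TT k (w @ [j]) n)" using CC_finite TT_finite by blast
  ultimately show ?thesis using TT_Suc_eq[OF assms]
    by (simp add: card_insert_if)
qed

context fs begin

lemma V_TT0:
  assumes "E \<noteq> {}"
  shows "{res t (TT k [] n) | t. t \<in> Xs} = V (TT k [] n)"
proof
  show "{res t (TT k [] n) | t. t \<in> Xs} \<subseteq> V (TT k [] n)" using res_V[OF TT_FG] by auto
next
  show "V (TT k [] n) \<subseteq> {res t (TT k [] n) | t. t \<in> Xs}"
  proof
    fix f assume f: "f \<in> V (TT k [] n)"
    obtain c0 where c0: "c0 \<in> E" using assms by auto
    have hyp: "v = [] \<and> B j c0 (f [j])" if "v @ [j] \<in> TT k [] n" "v \<notin> TT k [] n" for v j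
    proof -
      have "reduced k (v @ [j])" "length (v @ [j]) \<le> n" using that(1) by (auto simp: TT_mem)
      then have "reduced k v" "length v \<le> n" by (auto simp: reduced_snoc)
      then have "v \<in> TT k [] n" by (simp add: TT_mem)
      then show ?thesis using that by simp
    qed
    have "(\<lambda>w. extr (TT k [] n) f c0 (rev w)) \<in> Xs \<and> res (\<lambda>w. extr (TT k [] n) f c0 (rev w)) (TT k [] n) = f"
      by (rule extension[OF TT_FG f c0]) (rule hyp; assumption)
    then show "f \<in> {res t (TT k [] n) | t. t \<in> Xs}"
      by (intro CollectI exI[of _ "\<lambda>w. extr (TT k [] n) f c0 (rev w)"]) simp
  qed
qed

lemma V_TTi:
  assumes i: "i < 2*k"
  shows "{res t (TT k [i] n) | t. t \<in> Xs} = V (TT k [i] n)"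
proof
  show "{res t (TT k [i] n) | t. t \<in> Xs} \<subseteq> V (TT k [i] n)" using res_V[OF TT_FG] by auto
next
  show "V (TT k [i] n) \<subseteq> {res t (TT k [i] n) | t. t \<in> Xs}"
  proof
    fix f assume f: "f \<in> V (TT k [i] n)"
    have "[i] \<in> TT k [i] n" using i by (auto simp: TT_mem intro: exI[of _ "[]"])
    then have "f [i] \<in> E" using f by (simp add: V_def)
    then obtain c0 where c0: "c0 \<in> E" "B i c0 (f [i])" using E_in[OF _ i] by blast
    have hyp: "v = [] \<and> B j c0 (f [j])" if a1: "v @ [j] \<in> TT k [i] n" and a2: "v \<notin> TT k [i] n" for v j
    proof -
      obtain h where h: "reduced k (v @ [j])" "v @ [j] = [i] @ h" "length h \<le> n"
        using a1 by (auto simp: TT_mem)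
      show ?thesis
      proof (cases h rule: rev_exhaust)
        case Nil then show ?thesis using h c0 by simp
      next
        case (snoc h' x)
        then have "v = [i] @ h'" using h(2) by simp
        moreover have "reduced k v" using h(1) by (simp add: reduced_snoc)
        ultimately have "v = [i] @ h'" "reduced k v" by auto
        then have "v \<in> TT k [i] n" using h snoc by (auto simp: TT_mem)
        then show ?thesis using a2 by simp
      qed
    qed
    have "(\<lambda>w. extr (TT k [i] n) f c0 (rev w)) \<in> Xs \<and> res (\<lambda>w. extr (TT k [i] n) f c0 (rev w)) (TT k [i] n) = f"
      by (rule extension[OF TT_FG f c0(1)]) (rule hyp; assumption)
    then show "f \<in> {res t (TT k [i] n) | t. t \<in> Xs}"
      by (intro CollectI exI[of _ "\<lambda>w. extr (TT k [i] n) f c0 (rev w)"]) simp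
  qed
qed

lemma V_finite: "finite R \<Longrightarrow> finite (V R)"
proof -
  assume "finite R"
  moreover have "V R \<subseteq> PiE R (\<lambda>_. UNIV)" unfolding V_def PiE_def extensional_def by auto
  ultimately show ?thesis using finite_PiE[of R "\<lambda>_. UNIV :: 'a set"] finite_subset by auto
qed

definition cnt :: "nat list \<Rightarrow> nat \<Rightarrow> 'a \<Rightarrow> nat" where
  "cnt w n a = card {f \<in> V (TT k w n). f w = a}"

lemma card_V_sum:
  assumes "w \<in> R" "finite R"
  shows "card (V R) = (\<Sum>a\<in>E. card {f \<in> V R. f w = a})"
proof -
  have "V R = {f \<in> V R. f w \<in> E}" using assms by (auto simp: V_def)
  then show ?thesis using card_fibers[OF V_finite[OF assms(2)], of E "\<lambda>f. f w"] by simp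
qed

lemma res_sub_V: "R' \<subseteq> R \<Longrightarrow> f \<in> V R \<Longrightarrow> res f R' \<in> V R'"
  unfolding V_def res_def by (auto simp: subset_iff)

lemma cnt_0: "reduced k w \<Longrightarrow> cnt w 0 a = (if a \<in> E then 1 else 0)"
proof -
  assume w: "reduced k w"
  have "{f \<in> V (TT k w 0). f w = a} = (if a \<in> E then {\<lambda>v. if v = w then a else undefined} else {})"
    unfolding TT_0[OF w] V_def by (auto simp: fun_eq_iff)
  then show ?thesis unfolding cnt_def by simp
qed

end

context fs begin

lemma m1:
  assumes w: "reduced k w" and v: "v \<in> TT k w (Suc n)" "v \<noteq> w"
  shows "v ! length w \<in> CC k w \<and> v \<in> TT k (w @ [v ! length w]) n"
  using TT_Suc_mem[OF w, of v n] v TT_child_idx by blast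

lemma m2:
  assumes w: "reduced k w" and j: "j \<in> CC k w" and v: "v \<in> TT k (w @ [j]) n"
  shows "v \<in> TT k w (Suc n) \<and> v \<noteq> w \<and> v ! length w = j"
  using TT_Suc_mem[OF w, of v n] j v TT_child_idx[OF v] by auto

lemma m3: "j \<in> CC k w \<Longrightarrow> w @ [j] \<in> TT k (w @ [j]) n"
  by (auto simp: TT_mem CC_def intro: exI[of _ "[]"])

lemma m4: "reduced k w \<Longrightarrow> w \<in> TT k w n"
  by (auto simp: TT_mem intro: exI[of _ "[]"])

lemma cnt_Suc:
  assumes w: "reduced k w" and a: "a \<in> E"
  shows "cnt w (Suc n) a = (\<Prod>j\<in>CC k w. \<Sum>b\<in>{b\<in>E. B j a b}. cnt (w @ [j]) n b)"
proof -
  define S where "S = {f \<in> V (TT k w (Suc n)). f w = a}"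
  define Q where "Q j = {g \<in> V (TT k (w @ [j]) n). B j a (g (w @ [j]))}" for j
  define P where "P = PiE (CC k w) Q"
  define \<phi> where "\<phi> f = restrict (\<lambda>j. res f (TT k (w @ [j]) n)) (CC k w)" for f
  define \<psi> where "\<psi> g = (\<lambda>v. if v = w then a else if v \<in> TT k w (Suc n) then g (v ! length w) v else undefined)"
    for g :: "nat \<Rightarrow> nat list \<Rightarrow> 'a"
  have "bij_betw \<phi> S P"
  proof (rule bij_betwI[where g = \<psi>])
    show "\<phi> \<in> S \<rightarrow> P"
    proof
      fix f assume f: "f \<in> S"
      show "\<phi> f \<in> P" unfolding P_def PiE_iff
      proof
        show "\<forall>j\<in>CC k w. \<phi> f j \<in> Q j"
        proof
          fix j assume j: "j \<in> CC k w"
          have sub: "TT k (w @ [j]) n \<subseteq> TT k w (Suc n)" using m2[OF w j] by blast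
          have "res f (TT k (w @ [j]) n) \<in> V (TT k (w @ [j]) n)"
            using res_sub_V[OF sub] f S_def by blast
          moreover have "B j a (f (w @ [j]))"
            using f m3[OF j, of n] sub m4[OF w] unfolding S_def V_def by blast
          ultimately show "\<phi> f j \<in> Q j" using j m3[OF j, of n]
            unfolding Q_def \<phi>_def by (simp add: res_def)
        qed
        show "\<phi> f \<in> extensional (CC k w)" unfolding \<phi>_def by simp
      qed
    qed
  next
    show "\<psi> \<in> P \<rightarrow> S"
    proof
      fix g assume g: "g \<in> P"
      have gj: "g j \<in> V (TT k (w @ [j]) n)" "B j a (g j (w @ [j]))" if "j \<in> CC k w" for j
        using g that unfolding P_def Q_def PiE_iff by auto
      show "\<psi> g \<in> S" unfolding S_def V_def mem_Collect_eq
      proof (intro conjI allI ballI impI)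
        fix v assume "v \<notin> TT k w (Suc n)"
        then show "\<psi> g v = undefined" using m4[OF w] unfolding \<psi>_def by auto
      next
        fix v assume v: "v \<in> TT k w (Suc n)"
        show "\<psi> g v \<in> E"
        proof (cases "v = w")
          case True then show ?thesis using a by (simp add: \<psi>_def)
        next
          case False
          then show ?thesis using m1[OF w v False] gj v unfolding \<psi>_def V_def by auto
        qed
      next
        fix v j assume v: "v \<in> TT k w (Suc n)" and vj: "v @ [j] \<in> TT k w (Suc n)"
        have vjw: "v @ [j] \<noteq> w" using v vj by (auto simp: TT_mem)
        have c1: "(v @ [j]) ! length w \<in> CC k w \<and> v @ [j] \<in> TT k (w @ [(v @ [j]) ! length w]) n"
          using m1[OF w vj vjw] .
        show "B j (\<psi> g v) (\<psi> g (v @ [j]))"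
        proof (cases "v = w")
          case True
          then show ?thesis using c1 gj vj unfolding \<psi>_def by simp
        next
          case False
          define i where "i = v ! length w"
          have c2: "i \<in> CC k w" "v \<in> TT k (w @ [i]) n" using m1[OF w v False] i_def by auto
          have "length w < length v" using TT_child_idx[OF c2(2)] by simp
          then have "(v @ [j]) ! length w = i" using i_def by (simp add: nth_append)
          then have c3: "v @ [j] \<in> TT k (w @ [i]) n" using c1 by simp
          have "B j (g i v) (g i (v @ [j]))" using gj(1)[OF c2(1)] c2(2) c3 unfolding V_def by blast
          then show ?thesis using False vjw v vj \<open>(v @ [j]) ! length w = i\<close> i_def
            unfolding \<psi>_def by simp
        qed
      next
        show "\<psi> g w = a" by (simp add: \<psi>_def)
      qed
    qed
  next
    fix f assume f: "f \<in> S"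
    show "\<psi> (\<phi> f) = f"
    proof
      fix v show "\<psi> (\<phi> f) v = f v"
      proof (cases "v = w")
        case True then show ?thesis using f by (simp add: \<psi>_def S_def)
      next
        case False
        show ?thesis
        proof (cases "v \<in> TT k w (Suc n)")
          case True
          then show ?thesis using m1[OF w True False] False
            unfolding \<psi>_def \<phi>_def by (simp add: res_def)
        next
          case nv: False
          then show ?thesis using f False unfolding \<psi>_def S_def V_def by simp
        qed
      qed
    qed
  next
    fix g assume g: "g \<in> P"
    have gj: "g j \<in> V (TT k (w @ [j]) n)" if "j \<in> CC k w" for j
      using g that unfolding P_def Q_def PiE_iff by auto
    show "\<phi> (\<psi> g) = g"
    proof
      fix j show "\<phi> (\<psi> g) j = g j"
      proof (cases "j \<in> CC k w")
        case False
        then show ?thesis using g unfolding \<phi>_def P_def PiE_iff extensional_def by simp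
      next
        case True
        show ?thesis
        proof
          fix v show "\<phi> (\<psi> g) j v = g j v"
          proof (cases "v \<in> TT k (w @ [j]) n")
            case True
            then show ?thesis using m2[OF w \<open>j \<in> CC k w\<close> True] \<open>j \<in> CC k w\<close>
              unfolding \<phi>_def \<psi>_def by (simp add: res_def)
          next
            case False
            then show ?thesis using gj[OF \<open>j \<in> CC k w\<close>] \<open>j \<in> CC k w\<close>
              unfolding \<phi>_def V_def by (simp add: res_def)
          qed
        qed
      qed
    qed
  qed
  then have "card S = card P" by (rule bij_betw_same_card)
  also have "\<dots> = (\<Prod>j\<in>CC k w. card (Q j))" unfolding P_def by (simp add: card_PiE CC_finite)
  also have "\<dots> = (\<Prod>j\<in>CC k w. \<Sum>b\<in>{b\<in>E. B j a b}. cnt (w @ [j]) n b)"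
  proof (rule prod.cong[OF refl])
    fix j assume j: "j \<in> CC k w"
    have "Q j = {g \<in> V (TT k (w @ [j]) n). g (w @ [j]) \<in> {b\<in>E. B j a b}}"
      using m3[OF j, of n] unfolding Q_def V_def by auto
    then show "card (Q j) = (\<Sum>b\<in>{b\<in>E. B j a b}. cnt (w @ [j]) n b)"
      using card_fibers[where F="{b\<in>E. B j a b}" and g="\<lambda>g. g (w @ [j])" and S="V (TT k (w @ [j]) n)", OF V_finite[OF TT_finite]]
      unfolding cnt_def by simp
  qed
  finally show ?thesis unfolding cnt_def S_def .
qed

end

definition sx :: "('a \<Rightarrow> 'a \<Rightarrow> bool) \<Rightarrow> 'a set \<Rightarrow> ('a \<Rightarrow> nat) \<Rightarrow> 'a \<Rightarrow> nat" where
  "sx A E u a = (\<Sum>b\<in>{b\<in>E. A a b}. u b)"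
definition sy :: "('a \<Rightarrow> 'a \<Rightarrow> bool) \<Rightarrow> 'a set \<Rightarrow> ('a \<Rightarrow> nat) \<Rightarrow> 'a \<Rightarrow> nat" where
  "sy A E v a = (\<Sum>c\<in>{c\<in>E. A c a}. v c)"

fun UV :: "nat \<Rightarrow> ('a \<Rightarrow> 'a \<Rightarrow> bool) \<Rightarrow> 'a set \<Rightarrow> nat \<Rightarrow> ('a \<Rightarrow> nat) \<times> ('a \<Rightarrow> nat)" where
  "UV k A E 0 = (\<lambda>_. 1, \<lambda>_. 1)"
| "UV k A E (Suc n) =
     (\<lambda>a. sx A E (fst (UV k A E n)) a ^ k * sy A E (snd (UV k A E n)) a ^ (k - 1),
      \<lambda>a. sx A E (fst (UV k A E n)) a ^ (k - 1) * sy A E (snd (UV k A E n)) a ^ k)"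

lemma prod_if_lt:
  "finite C \<Longrightarrow> (\<Prod>j\<in>C. if j < k then x else y) = x ^ card {j\<in>C. j < k} * (y::nat) ^ card {j\<in>C. \<not> j < k}"
  by (simp add: prod.If_cases Int_def Collect_conj_eq[symmetric] set_diff_eq)

lemma last_lt: "reduced k w \<Longrightarrow> w \<noteq> [] \<Longrightarrow> last w < 2*k"
  by (meson last_in_set lessThan_iff reduced_succ subsetD)

context fs begin

lemma CC_Nil: "CC k [] = {..<2*k}"
  by (auto simp: CC_def)

lemma CC_cons:
  assumes "reduced k w" "w \<noteq> []"
  shows "CC k w = {..<2*k} - {inv (last w)}"
proof -
  have "last w < 2*k" using assms by (rule last_lt)
  then show ?thesis using assms Kmat_inv[of "last w"] unfolding CC_def by (auto simp: reduced_snoc)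
qed

lemma card_CC: "reduced k w \<Longrightarrow> w \<noteq> [] \<Longrightarrow> card (CC k w) = 2*k - 1"
proof -
  assume a: "reduced k w" "w \<noteq> []"
  have "last w < 2*k" using a by (rule last_lt)
  then have "inv (last w) < 2*k" by (rule inv_lt)
  then show ?thesis using CC_cons[OF a] by simp
qed

lemma cnt_notE: "reduced k w \<Longrightarrow> a \<notin> E \<Longrightarrow> cnt w n a = 0"
proof -
  assume w: "reduced k w" and a: "a \<notin> E"
  have "{f \<in> V (TT k w n). f w = a} = {}" using m4[OF w, of n] a unfolding V_def by auto
  then show ?thesis unfolding cnt_def by (metis card.empty)
qed

abbreviation "U n \<equiv> fst (UV k A E n)"
abbreviation "W n \<equiv> snd (UV k A E n)"
abbreviation "XX n \<equiv> sx A E (U n)"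
abbreviation "YY n \<equiv> sy A E (W n)"

lemma sum_child:
  assumes j: "j < 2*k" and IH: "\<And>b. cnt (w @ [j]) n b = (if b \<in> E then (if j < k then U n b else W n b) else 0)"
  shows "(\<Sum>b\<in>{b\<in>E. B j a b}. cnt (w @ [j]) n b) = (if j < k then XX n a else YY n a)"
  using IH by (simp add: sx_def sy_def AAt_def)

lemma cards_lo:
  assumes "l < k"
  shows "card {j\<in>{..<2*k} - {inv l}. j < k} = k" "card {j\<in>{..<2*k} - {inv l}. \<not> j < k} = k - 1"
proof -
  have "{j\<in>{..<2*k} - {inv l}. j < k} = {..<k}" using assms by (auto simp: inv_def)
  then show "card {j\<in>{..<2*k} - {inv l}. j < k} = k" by simp
  have "{j\<in>{..<2*k} - {inv l}. \<not> j < k} = {k..<2*k} - {l + k}" using assms by (auto simp: inv_def)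
  then show "card {j\<in>{..<2*k} - {inv l}. \<not> j < k} = k - 1" using assms by simp
qed

lemma cards_hi:
  assumes "k \<le> l" "l < 2*k"
  shows "card {j\<in>{..<2*k} - {inv l}. j < k} = k - 1" "card {j\<in>{..<2*k} - {inv l}. \<not> j < k} = k"
proof -
  have "{j\<in>{..<2*k} - {inv l}. j < k} = {..<k} - {l - k}" using assms by (auto simp: inv_def)
  then show "card {j\<in>{..<2*k} - {inv l}. j < k} = k - 1" using assms by simp
  have "{j\<in>{..<2*k} - {inv l}. \<not> j < k} = {k..<2*k}" using assms by (auto simp: inv_def)
  then show "card {j\<in>{..<2*k} - {inv l}. \<not> j < k} = k" by simp
qed

lemma cnt_type:
  "reduced k w \<Longrightarrow> w \<noteq> [] \<Longrightarrow>
     cnt w n a = (if a \<in> E then (if last w < k then U n a else W n a) else 0)"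
proof (induction n arbitrary: w a)
  case 0 then show ?case by (simp add: cnt_0)
next
  case (Suc n)
  show ?case
  proof (cases "a \<in> E")
    case False then show ?thesis using cnt_notE[OF Suc.prems(1)] by simp
  next
    case a: True
    have l: "last w < 2*k" using Suc.prems by (rule last_lt)
    have "cnt w (Suc n) a = (\<Prod>j\<in>CC k w. \<Sum>b\<in>{b\<in>E. B j a b}. cnt (w @ [j]) n b)"
      by (rule cnt_Suc[OF Suc.prems(1) a])
    also have "\<dots> = (\<Prod>j\<in>CC k w. if j < k then XX n a else YY n a)"
    proof (rule prod.cong[OF refl])
      fix j assume j: "j \<in> CC k w"
      then have r: "reduced k (w @ [j])" and jl: "j < 2*k" by (auto simp: CC_def)
      show "(\<Sum>b\<in>{b\<in>E. B j a b}. cnt (w @ [j]) n b) = (if j < k then XX n a else YY n a)"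
        by (rule sum_child[OF jl]) (use Suc.IH[OF r] in simp)
    qed
    also have "\<dots> = XX n a ^ card {j\<in>CC k w. j < k} * YY n a ^ card {j\<in>CC k w. \<not> j < k}"
      by (rule prod_if_lt[OF CC_finite])
    also have "\<dots> = (if last w < k then U (Suc n) a else W (Suc n) a)"
      using cards_lo[of "last w"] cards_hi[of "last w"] l CC_cons[OF Suc.prems] by auto
    finally show ?thesis using a by simp
  qed
qed

lemma cnt_root: "a \<in> E \<Longrightarrow> cnt [] (Suc n) a = XX n a ^ k * YY n a ^ k"
proof -
  assume a: "a \<in> E"
  have "cnt [] (Suc n) a = (\<Prod>j\<in>CC k []. \<Sum>b\<in>{b\<in>E. B j a b}. cnt ([] @ [j]) n b)"
    by (rule cnt_Suc[OF _ a]) simp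
  also have "\<dots> = (\<Prod>j\<in>CC k []. if j < k then XX n a else YY n a)"
  proof (rule prod.cong[OF refl])
    fix j assume j: "j \<in> CC k []"
    then have r: "reduced k ([] @ [j])" and jl: "j < 2*k" by (auto simp: CC_def)
    show "(\<Sum>b\<in>{b\<in>E. B j a b}. cnt ([] @ [j]) n b) = (if j < k then XX n a else YY n a)"
      by (rule sum_child[OF jl]) (use cnt_type[OF r] in simp)
  qed
  also have "\<dots> = XX n a ^ card {j\<in>CC k []. j < k} * YY n a ^ card {j\<in>CC k []. \<not> j < k}"
    by (rule prod_if_lt[OF CC_finite])
  also have "{j\<in>CC k []. j < k} = {..<k}" by (auto simp: CC_Nil)
  also have "{j\<in>CC k []. \<not> j < k} = {k..<2*k}" by (auto simp: CC_Nil)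
  finally show ?thesis by simp
qed

lemma pcount_Delta:
  assumes "E \<noteq> {}"
  shows "pcount k Xs (Delta k (Suc n)) = (\<Sum>a\<in>E. XX n a ^ k * YY n a ^ k)"
proof -
  have "pcount k Xs (Delta k (Suc n)) = card (V (TT k [] (Suc n)))"
    unfolding Delta_eq pcount_res[OF TT_FG] V_TT0[OF assms] ..
  also have "\<dots> = (\<Sum>a\<in>E. cnt [] (Suc n) a)"
    unfolding cnt_def by (rule card_V_sum[OF m4 TT_finite]) simp
  also have "\<dots> = (\<Sum>a\<in>E. XX n a ^ k * YY n a ^ k)"
    by (rule sum.cong[OF refl]) (simp add: cnt_root)
  finally show ?thesis .
qed

lemma pcount_Dbar:
  assumes "i < 2*k"
  shows "pcount k Xs (Delta_bar k [i] n) = (\<Sum>a\<in>E. if i < k then U n a else W n a)"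
proof -
  have "pcount k Xs (Delta_bar k [i] n) = card (V (TT k [i] n))"
    unfolding Delta_bar_eq[OF assms] pcount_res[OF TT_FG] V_TTi[OF assms] ..
  also have "\<dots> = (\<Sum>a\<in>E. cnt [i] n a)"
    unfolding cnt_def by (rule card_V_sum[OF m4 TT_finite]) (simp add: assms)
  also have "\<dots> = (\<Sum>a\<in>E. if i < k then U n a else W n a)"
    by (rule sum.cong[OF refl]) (simp add: cnt_type assms)
  finally show ?thesis .
qed

lemma card_TT_nonroot:
  "reduced k w \<Longrightarrow> w \<noteq> [] \<Longrightarrow> card (TT k w n) = (\<Sum>l\<le>n. (2*k-1)^l)"
proof (induction n arbitrary: w)
  case 0 then show ?case by (simp add: TT_0)
next
  case (Suc n)
  have "card (TT k w (Suc n)) = 1 + (\<Sum>j\<in>CC k w. card (TT k (w @ [j]) n))"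
    by (rule card_TT_Suc[OF Suc.prems(1)])
  also have "\<dots> = 1 + (\<Sum>j\<in>CC k w. (\<Sum>l\<le>n. (2*k-1)^l))"
    by (simp add: Suc.IH CC_def)
  also have "\<dots> = 1 + (2*k-1) * (\<Sum>l\<le>n. (2*k-1)^l)"
    using card_CC[OF Suc.prems] by simp
  also have "\<dots> = (\<Sum>l\<le>Suc n. (2*k-1)^l)"
    unfolding sum.atMost_Suc_shift by (simp add: sum_distrib_left)
  finally show ?case .
qed

lemma card_Dbar: "i < 2*k \<Longrightarrow> card (Delta_bar k [i] n) = (\<Sum>l\<le>n. (2*k-1)^l)"
  by (simp add: Delta_bar_eq card_TT_nonroot)

lemma card_Delta: "card (Delta k (Suc n)) = 1 + 2*k * (\<Sum>l\<le>n. (2*k-1)^l)"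
proof -
  have "card (TT k [] (Suc n)) = 1 + (\<Sum>j\<in>CC k []. card (TT k ([] @ [j]) n))"
    by (rule card_TT_Suc) simp
  also have "\<dots> = 1 + (\<Sum>j\<in>CC k []. (\<Sum>l\<le>n. (2*k-1)^l))"
    by (rule arg_cong[where f="\<lambda>x. 1 + x"], rule sum.cong[OF refl]) (simp add: card_TT_nonroot CC_Nil)
  finally show ?thesis by (simp add: Delta_eq CC_Nil)
qed

end

lemma ln_sum_le:
  fixes f :: "'b \<Rightarrow> real"
  assumes "finite S" "S \<noteq> {}" "\<And>x. x \<in> S \<Longrightarrow> 0 < f x" "\<And>x. x \<in> S \<Longrightarrow> ln (f x) \<le> T"
  shows "ln (\<Sum>x\<in>S. f x) \<le> ln (real (card S)) + T"
proof -
  have "f x \<le> exp T" if "x \<in> S" for x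
    using assms(3,4)[OF that] by (metis exp_le_cancel_iff exp_ln)
  then have "(\<Sum>x\<in>S. f x) \<le> real (card S) * exp T" by (rule sum_bounded_above)
  moreover have "0 < (\<Sum>x\<in>S. f x)" using assms by (intro sum_pos) auto
  moreover have "0 < real (card S)" using assms by (simp add: card_gt_0_iff)
  ultimately have "ln (\<Sum>x\<in>S. f x) \<le> ln (real (card S) * exp T)" by (intro ln_mono) auto
  also have "\<dots> = ln (real (card S)) + T" using \<open>0 < real (card S)\<close> by (simp add: ln_mult)
  finally show ?thesis .
qed

lemma ln_sum_ge:
  fixes f :: "'b \<Rightarrow> real"
  assumes "finite S" "x \<in> S" "\<And>y. y \<in> S \<Longrightarrow> 0 < f y"
  shows "ln (f x) \<le> ln (\<Sum>y\<in>S. f y)"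
proof -
  have "f x \<le> (\<Sum>y\<in>S. f y)" using assms by (intro member_le_sum) (auto intro: less_imp_le)
  then show ?thesis using assms(2,3) by (intro ln_mono) auto
qed

lemma ln_sum_wit:
  fixes f :: "'b \<Rightarrow> real"
  assumes "finite S" "S \<noteq> {}" "\<And>y. y \<in> S \<Longrightarrow> 0 < f y"
  shows "\<exists>x\<in>S. ln (\<Sum>y\<in>S. f y) \<le> ln (real (card S)) + ln (f x)"
proof -
  have "Max (f ` S) \<in> f ` S" using assms by (intro Max_in) auto
  then obtain x where x: "x \<in> S" "f x = Max (f ` S)" by auto
  have "f y \<le> f x" if "y \<in> S" for y using x assms(1) that by simp
  then have "(\<Sum>y\<in>S. f y) \<le> real (card S) * f x" by (rule sum_bounded_above)
  moreover have "0 < (\<Sum>x\<in>S. f x)" using assms by (intro sum_pos) auto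
  moreover have "0 < real (card S)" using assms by (simp add: card_gt_0_iff)
  ultimately have "ln (\<Sum>y\<in>S. f y) \<le> ln (real (card S) * f x)" by (intro ln_mono) auto
  also have "\<dots> = ln (real (card S)) + ln (f x)" using \<open>0 < real (card S)\<close> assms(3)[OF x(1)] by (simp add: ln_mult)
  finally show ?thesis using x(1) by blast
qed

locale an =
  fixes k :: nat and A :: "'a \<Rightarrow> 'a \<Rightarrow> bool" and E :: "'a set"
  assumes k2: "2 \<le> k" and finE: "finite E" and neE: "E \<noteq> {}"
    and outE: "\<And>a. a \<in> E \<Longrightarrow> \<exists>b\<in>E. A a b" and inE: "\<And>a. a \<in> E \<Longrightarrow> \<exists>c\<in>E. A c a"
begin

abbreviation "U n \<equiv> fst (UV k A E n)"
abbreviation "W n \<equiv> snd (UV k A E n)"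
abbreviation "XX n \<equiv> sx A E (U n)"
abbreviation "YY n \<equiv> sy A E (W n)"

lemma sx_ge1: "a \<in> E \<Longrightarrow> (\<And>b. b \<in> E \<Longrightarrow> 1 \<le> f b) \<Longrightarrow> 1 \<le> sx A E f a"
proof -
  assume a: "a \<in> E" and f: "\<And>b. b \<in> E \<Longrightarrow> 1 \<le> f b"
  obtain b where b: "b \<in> E" "A a b" using outE[OF a] by blast
  have "f b \<le> sx A E f a" unfolding sx_def using b finE by (intro member_le_sum) auto
  then show ?thesis using f[OF b(1)] by simp
qed

lemma sy_ge1: "a \<in> E \<Longrightarrow> (\<And>b. b \<in> E \<Longrightarrow> 1 \<le> f b) \<Longrightarrow> 1 \<le> sy A E f a"
proof -
  assume a: "a \<in> E" and f: "\<And>b. b \<in> E \<Longrightarrow> 1 \<le> f b"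
  obtain b where b: "b \<in> E" "A b a" using inE[OF a] by blast
  have "f b \<le> sy A E f a" unfolding sy_def using b finE by (intro member_le_sum) auto
  then show ?thesis using f[OF b(1)] by simp
qed

lemma UW_ge1: "a \<in> E \<Longrightarrow> 1 \<le> U n a \<and> 1 \<le> W n a"
proof (induction n arbitrary: a)
  case 0 then show ?case by simp
next
  case (Suc n)
  have "1 \<le> XX n a" "1 \<le> YY n a" using sx_ge1[OF Suc.prems] sy_ge1[OF Suc.prems] Suc.IH by auto
  then show ?case by (simp add: Let_def)
qed

lemma XY_ge1: "a \<in> E \<Longrightarrow> 1 \<le> XX n a \<and> 1 \<le> YY n a"
  using sx_ge1 sy_ge1 UW_ge1 by blast

definition q :: real where "q = 2 * real k - 1"
definition c :: real where "c = ln (real (card E))"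

lemma q_gt: "3 \<le> q" using k2 unfolding q_def by simp
lemma q_pos: "0 < q" using q_gt by simp
lemma c_nonneg: "0 \<le> c" unfolding c_def using finE neE by (simp add: card_gt_0_iff Suc_le_eq)

lemma ln_U: "a \<in> E \<Longrightarrow> ln (real (U (Suc n) a)) = real k * ln (real (XX n a)) + (real k - 1) * ln (real (YY n a))"
proof -
  assume a: "a \<in> E"
  have p: "0 < real (XX n a)" "0 < real (YY n a)" using XY_ge1[OF a, of n] by auto
  have "real (k - 1) = real k - 1" using k2 by simp
  then show ?thesis using p by (simp add: ln_mult ln_realpow)
qed

lemma ln_W: "a \<in> E \<Longrightarrow> ln (real (W (Suc n) a)) = (real k - 1) * ln (real (XX n a)) + real k * ln (real (YY n a))"
proof -
  assume a: "a \<in> E"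
  have p: "0 < real (XX n a)" "0 < real (YY n a)" using XY_ge1[OF a, of n] by auto
  have "real (k - 1) = real k - 1" using k2 by simp
  then show ?thesis using p by (simp add: ln_mult ln_realpow)
qed

definition xi :: "nat \<Rightarrow> 'a \<Rightarrow> real" where "xi n a = ln (real (XX n a)) / q ^ n"
definition eta :: "nat \<Rightarrow> 'a \<Rightarrow> real" where "eta n a = ln (real (YY n a)) / q ^ n"
definition M :: "nat \<Rightarrow> real" where "M n = Max ((\<lambda>a. max (xi n a) (eta n a)) ` E)"

lemma xi_le: "a \<in> E \<Longrightarrow> xi n a \<le> M n"
  unfolding M_def using finE by (intro Max.coboundedI[THEN order.trans[rotated]]) auto

lemma eta_le: "a \<in> E \<Longrightarrow> eta n a \<le> M n"
  unfolding M_def using finE by (intro Max.coboundedI[THEN order.trans[rotated]]) auto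

lemma lnX: "ln (real (XX n a)) = q ^ n * xi n a"
  unfolding xi_def using q_pos by simp
lemma lnY: "ln (real (YY n a)) = q ^ n * eta n a"
  unfolding eta_def using q_pos by simp

lemma xi_nonneg: "a \<in> E \<Longrightarrow> 0 \<le> xi n a"
  unfolding xi_def using XY_ge1[of a n] q_pos by simp

lemma M_nonneg: "0 \<le> M n"
proof -
  obtain a where "a \<in> E" using neE by blast
  then show ?thesis using xi_nonneg xi_le order.trans by blast
qed

lemma M_attained: "\<exists>a\<in>E. M n = xi n a \<or> M n = eta n a"
proof -
  have "M n \<in> (\<lambda>a. max (xi n a) (eta n a)) ` E" unfolding M_def using finE neE by (intro Max_in) auto
  then obtain a where "a \<in> E" "M n = max (xi n a) (eta n a)" by auto
  then show ?thesis by (metis max_def)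
qed

lemma lnU_le: "a \<in> E \<Longrightarrow> ln (real (U (Suc n) a)) \<le> q ^ Suc n * M n"
proof -
  assume a: "a \<in> E"
  have "ln (real (U (Suc n) a)) = q ^ n * (real k * xi n a + (real k - 1) * eta n a)"
    unfolding ln_U[OF a] lnX lnY by (simp add: algebra_simps)
  also have "\<dots> \<le> q ^ n * (real k * M n + (real k - 1) * M n)"
    using xi_le[OF a] eta_le[OF a] k2 q_pos
    by (intro mult_left_mono add_mono mult_left_mono) auto
  also have "\<dots> = q ^ Suc n * M n" unfolding q_def by (simp add: algebra_simps)
  finally show ?thesis .
qed

lemma lnW_le: "a \<in> E \<Longrightarrow> ln (real (W (Suc n) a)) \<le> q ^ Suc n * M n"
proof -
  assume a: "a \<in> E"
  have "ln (real (W (Suc n) a)) = q ^ n * ((real k - 1) * xi n a + real k * eta n a)"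
    unfolding ln_W[OF a] lnX lnY by (simp add: algebra_simps)
  also have "\<dots> \<le> q ^ n * ((real k - 1) * M n + real k * M n)"
    using xi_le[OF a] eta_le[OF a] k2 q_pos
    by (intro mult_left_mono add_mono mult_left_mono) auto
  also have "\<dots> = q ^ Suc n * M n" unfolding q_def by (simp add: algebra_simps)
  finally show ?thesis .
qed

lemma card_le_c: "S \<subseteq> E \<Longrightarrow> S \<noteq> {} \<Longrightarrow> ln (real (card S)) \<le> c"
proof -
  assume "S \<subseteq> E" "S \<noteq> {}"
  then have "card S \<le> card E" "0 < card S" using finE by (auto intro: card_mono simp: card_gt_0_iff finite_subset)
  then show ?thesis unfolding c_def by simp
qed

lemma outS: "a \<in> E \<Longrightarrow> {b\<in>E. A a b} \<noteq> {}" using outE by auto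
lemma inS: "a \<in> E \<Longrightarrow> {b\<in>E. A b a} \<noteq> {}" using inE by auto

lemma lnX_Suc_le: "a \<in> E \<Longrightarrow> ln (real (XX (Suc n) a)) \<le> c + q ^ Suc n * M n"
proof -
  assume a: "a \<in> E"
  have "ln (real (XX (Suc n) a)) = ln (\<Sum>b\<in>{b\<in>E. A a b}. real (U (Suc n) b))"
    by (simp add: sx_def)
  also have "\<dots> \<le> ln (real (card {b\<in>E. A a b})) + q ^ Suc n * M n"
  proof (rule ln_sum_le)
    fix b assume b: "b \<in> {b\<in>E. A a b}"
    have "1 \<le> U (Suc n) b" using UW_ge1[of b "Suc n"] b by blast
    then show "0 < real (U (Suc n) b)" by (simp del: UV.simps)
    show "ln (real (U (Suc n) b)) \<le> q ^ Suc n * M n" using lnU_le b by blast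
  qed (use finE outS[OF a] in auto)
  also have "\<dots> \<le> c + q ^ Suc n * M n" using card_le_c[OF _ outS[OF a]] by auto
  finally show ?thesis .
qed

lemma lnY_Suc_le: "a \<in> E \<Longrightarrow> ln (real (YY (Suc n) a)) \<le> c + q ^ Suc n * M n"
proof -
  assume a: "a \<in> E"
  have "ln (real (YY (Suc n) a)) = ln (\<Sum>b\<in>{b\<in>E. A b a}. real (W (Suc n) b))"
    by (simp add: sy_def)
  also have "\<dots> \<le> ln (real (card {b\<in>E. A b a})) + q ^ Suc n * M n"
  proof (rule ln_sum_le)
    fix b assume b: "b \<in> {b\<in>E. A b a}"
    have "1 \<le> W (Suc n) b" using UW_ge1[of b "Suc n"] b by blast
    then show "0 < real (W (Suc n) b)" by (simp del: UV.simps)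
    show "ln (real (W (Suc n) b)) \<le> q ^ Suc n * M n" using lnW_le b by blast
  qed (use finE inS[OF a] in auto)
  also have "\<dots> \<le> c + q ^ Suc n * M n" using card_le_c[OF _ inS[OF a]] by auto
  finally show ?thesis .
qed

lemma M_Suc_le: "M (Suc n) \<le> M n + c / q ^ Suc n"
proof -
  obtain a where a: "a \<in> E" "M (Suc n) = xi (Suc n) a \<or> M (Suc n) = eta (Suc n) a"
    using M_attained by blast
  have qp: "0 < q ^ Suc n" using q_pos by simp
  have "q ^ Suc n * M (Suc n) \<le> c + q ^ Suc n * M n"
    using a lnX_Suc_le[OF a(1), of n] lnY_Suc_le[OF a(1), of n] unfolding lnX lnY by auto
  then have "M (Suc n) \<le> (c + q ^ Suc n * M n) / q ^ Suc n" using qp by (simp add: field_simps)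
  also have "\<dots> = M n + c / q ^ Suc n"
    using qp q_pos by (simp only: add_divide_distrib) (simp del: power_Suc)
  finally show ?thesis .
qed

end

declare UV.simps(2)[simp del]

lemma arith1:
  fixes K x y m d :: real
  assumes "2 \<le> K" "x \<le> m" "y \<le> m" "0 \<le> d" "(2*K-1)*m - d \<le> K*x + (K-1)*y"
  shows "m - d \<le> x \<and> m - d \<le> y"
proof
  have "(K-1)*y \<le> (K-1)*m" using assms by (intro mult_left_mono) auto
  then have h1: "K*m - d \<le> K*x" using assms(5) by (simp add: algebra_simps)
  show "m - d \<le> x"
  proof (rule ccontr)
    assume "\<not> m - d \<le> x"
    then have "K*x < K*(m-d)" using assms by (intro mult_strict_left_mono) auto
    moreover have "1*d \<le> K*d" by (rule mult_right_mono) (use assms in auto)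
    ultimately show False using h1 by (simp add: algebra_simps)
  qed
  have "K*x \<le> K*m" using assms by (intro mult_left_mono) auto
  then have h2: "(K-1)*m - d \<le> (K-1)*y" using assms(5) by (simp add: algebra_simps)
  show "m - d \<le> y"
  proof (rule ccontr)
    assume "\<not> m - d \<le> y"
    then have "(K-1)*y < (K-1)*(m-d)" using assms by (intro mult_strict_left_mono) auto
    moreover have "1*d \<le> (K-1)*d" by (rule mult_right_mono) (use assms in auto)
    ultimately show False using h2 by (simp add: algebra_simps)
  qed
qed

context an begin

definition D :: "nat \<Rightarrow> real" where "D n = M n + c / ((q - 1) * q ^ n)"

lemma D_dec: "D (Suc n) \<le> D n"
proof -
  have e: "c / q ^ Suc n + c / ((q - 1) * q ^ Suc n) = c / ((q - 1) * q ^ n)"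
    using q_gt by (simp add: field_simps)
  show ?thesis unfolding D_def using M_Suc_le[of n] e by linarith
qed

lemma D_nonneg: "0 \<le> D n"
  unfolding D_def using M_nonneg c_nonneg q_gt by (intro add_nonneg_nonneg divide_nonneg_pos) auto

lemma pow_inv_zero: "(\<lambda>n. r / q ^ n) \<longlonglongrightarrow> 0"
proof -
  have "(\<lambda>n. inverse (q ^ n)) \<longlonglongrightarrow> 0" using q_gt by (intro LIMSEQ_inverse_realpow_zero) auto
  then have "(\<lambda>n. r * inverse (q ^ n)) \<longlonglongrightarrow> 0" by (rule tendsto_mult_right_zero)
  then show ?thesis by (simp add: divide_inverse)
qed

lemma M_convergent: "convergent M"
proof -
  have "decseq D" using D_dec by (intro decseq_SucI)
  moreover have "\<forall>i. 0 \<le> D i" using D_nonneg by simp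
  ultimately obtain L where L: "D \<longlonglongrightarrow> L" using decseq_convergent by blast
  have "(\<lambda>n. (c / (q - 1)) / q ^ n) \<longlonglongrightarrow> 0" by (rule pow_inv_zero)
  moreover have "(\<lambda>n. (c / (q - 1)) / q ^ n) = (\<lambda>n. c / ((q - 1) * q ^ n))" by (simp add: field_simps)
  ultimately have "(\<lambda>n. D n - c / ((q - 1) * q ^ n)) \<longlonglongrightarrow> L - 0" using L by (intro tendsto_diff) auto
  then have "M \<longlonglongrightarrow> L" unfolding D_def by simp
  then show ?thesis by (rule convergentI)
qed

definition Ml :: real where "Ml = lim M"

lemma M_lim: "M \<longlonglongrightarrow> Ml"
  unfolding Ml_def using M_convergent by (simp add: convergent_LIMSEQ_iff)

definition \<delta> :: "nat \<Rightarrow> real" where "\<delta> n = q * (M n - M (Suc n)) + c / q ^ n"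

lemma delta_nonneg: "0 \<le> \<delta> n"
proof -
  have "c / q ^ Suc n = (c / q ^ n) / q" by simp
  then have "q * (c / q ^ Suc n) = c / q ^ n" using q_pos by simp
  moreover have "q * (M (Suc n) - M n) \<le> q * (c / q ^ Suc n)"
    using M_Suc_le[of n] q_pos by (intro mult_left_mono) auto
  ultimately show ?thesis unfolding \<delta>_def by (simp add: algebra_simps)
qed

lemma delta_lim: "\<delta> \<longlonglongrightarrow> 0"
proof -
  have "(\<lambda>n. q * (M n - M (Suc n)) + c / q ^ n) \<longlonglongrightarrow> q * (Ml - Ml) + 0"
    using M_lim pow_inv_zero by (intro tendsto_intros LIMSEQ_Suc) auto
  then show ?thesis unfolding \<delta>_def by simp
qed

lemma wit: "\<exists>b\<in>E. M n - \<delta> n \<le> xi n b \<and> M n - \<delta> n \<le> eta n b"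
proof -
  obtain a where a: "a \<in> E" "M (Suc n) = xi (Suc n) a \<or> M (Suc n) = eta (Suc n) a"
    using M_attained by blast
  have qn: "0 < q ^ n" using q_pos by simp
  have K: "2 \<le> real k" using k2 by simp
  have qk: "q = 2 * real k - 1" by (simp add: q_def)
  have key: "q ^ n * (q * M (Suc n) - \<delta> n + q * (M n - M (Suc n))) = q ^ Suc n * M (Suc n) - c"
    unfolding \<delta>_def using qn q_pos by (simp add: algebra_simps)
  from a(2) show ?thesis
  proof
    assume h: "M (Suc n) = xi (Suc n) a"
    have pos: "\<And>b. b \<in> {b\<in>E. A a b} \<Longrightarrow> 0 < real (U (Suc n) b)"
    proof -
      fix b assume "b \<in> {b\<in>E. A a b}"
      then have "1 \<le> U (Suc n) b" using UW_ge1[of b "Suc n"] by blast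
      then show "0 < real (U (Suc n) b)" by simp
    qed
    have fS: "finite {b\<in>E. A a b}" using finE by simp
    have "\<exists>b\<in>{b\<in>E. A a b}. ln (\<Sum>b\<in>{b\<in>E. A a b}. real (U (Suc n) b)) \<le> ln (real (card {b\<in>E. A a b})) + ln (real (U (Suc n) b))"
      by (rule ln_sum_wit[OF fS outS[OF a(1)] pos])
    then obtain b where b: "b \<in> {b\<in>E. A a b}"
      "ln (\<Sum>b\<in>{b\<in>E. A a b}. real (U (Suc n) b)) \<le> ln (real (card {b\<in>E. A a b})) + ln (real (U (Suc n) b))"
      by (rule bexE)
    have bE: "b \<in> E" using b(1) by simp
    have "q ^ Suc n * M (Suc n) = ln (real (XX (Suc n) a))" using h lnX by simp
    also have "\<dots> = ln (\<Sum>b\<in>{b\<in>E. A a b}. real (U (Suc n) b))" by (simp add: sx_def)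
    also have "\<dots> \<le> c + ln (real (U (Suc n) b))" using b(2) card_le_c[OF _ outS[OF a(1)]] by auto
    also have "ln (real (U (Suc n) b)) = q ^ n * (real k * xi n b + (real k - 1) * eta n b)"
      unfolding ln_U[OF bE] lnX lnY by (simp add: algebra_simps)
    finally have "q ^ n * (q * M n - \<delta> n) \<le> q ^ n * (real k * xi n b + (real k - 1) * eta n b)"
      using key by (simp add: algebra_simps)
    then have "q * M n - \<delta> n \<le> real k * xi n b + (real k - 1) * eta n b"
      using qn by simp
    then have "M n - \<delta> n \<le> xi n b \<and> M n - \<delta> n \<le> eta n b"
      using arith1[OF K xi_le[OF bE] eta_le[OF bE] delta_nonneg] qk by simp
    then show ?thesis using bE by blast
  next
    assume h: "M (Suc n) = eta (Suc n) a"
    have pos: "\<And>b. b \<in> {b\<in>E. A b a} \<Longrightarrow> 0 < real (W (Suc n) b)"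
    proof -
      fix b assume "b \<in> {b\<in>E. A b a}"
      then have "1 \<le> W (Suc n) b" using UW_ge1[of b "Suc n"] by blast
      then show "0 < real (W (Suc n) b)" by simp
    qed
    have fS: "finite {b\<in>E. A b a}" using finE by simp
    have "\<exists>b\<in>{b\<in>E. A b a}. ln (\<Sum>b\<in>{b\<in>E. A b a}. real (W (Suc n) b)) \<le> ln (real (card {b\<in>E. A b a})) + ln (real (W (Suc n) b))"
      by (rule ln_sum_wit[OF fS inS[OF a(1)] pos])
    then obtain b where b: "b \<in> {b\<in>E. A b a}"
      "ln (\<Sum>b\<in>{b\<in>E. A b a}. real (W (Suc n) b)) \<le> ln (real (card {b\<in>E. A b a})) + ln (real (W (Suc n) b))"
      by (rule bexE)
    have bE: "b \<in> E" using b(1) by simp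
    have "q ^ Suc n * M (Suc n) = ln (real (YY (Suc n) a))" using h lnY by simp
    also have "\<dots> = ln (\<Sum>b\<in>{b\<in>E. A b a}. real (W (Suc n) b))" by (simp add: sy_def)
    also have "\<dots> \<le> c + ln (real (W (Suc n) b))" using b(2) card_le_c[OF _ inS[OF a(1)]] by auto
    also have "ln (real (W (Suc n) b)) = q ^ n * (real k * eta n b + (real k - 1) * xi n b)"
      unfolding ln_W[OF bE] lnX lnY by (simp add: algebra_simps)
    finally have "q ^ n * (q * M n - \<delta> n) \<le> q ^ n * (real k * eta n b + (real k - 1) * xi n b)"
      using key by (simp add: algebra_simps)
    then have "q * M n - \<delta> n \<le> real k * eta n b + (real k - 1) * xi n b"
      using qn by simp
    then have "M n - \<delta> n \<le> eta n b \<and> M n - \<delta> n \<le> xi n b"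
      using arith1[OF K eta_le[OF bE] xi_le[OF bE] delta_nonneg] qk by simp
    then show ?thesis using bE by blast
  qed
qed

end

lemma sandwich_seq:
  fixes f lo hi :: "nat \<Rightarrow> real"
  assumes "\<And>n. lo n \<le> f n" "\<And>n. f n \<le> hi n" "lo \<longlonglongrightarrow> L" "hi \<longlonglongrightarrow> L"
  shows "f \<longlonglongrightarrow> L"
  using assms by (intro tendsto_sandwich[of lo f sequentially hi L]) (auto intro: always_eventually)

context an begin

lemma U_pos: "a \<in> E \<Longrightarrow> 0 < real (U n a)" using UW_ge1[of a n] by simp
lemma W_pos: "a \<in> E \<Longrightarrow> 0 < real (W n a)" using UW_ge1[of a n] by simp

lemma c_le: "ln (real (card E)) \<le> c" by (simp add: c_def)

lemma lim_U: "(\<lambda>n. ln (\<Sum>a\<in>E. real (U n a)) / q ^ n) \<longlonglongrightarrow> Ml"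
proof -
  define f where "f n = ln (\<Sum>a\<in>E. real (U n a)) / q ^ n" for n
  have qp: "0 < q ^ Suc n" for n using q_pos by simp
  have lo: "M n - \<delta> n \<le> f (Suc n)" for n
  proof -
    obtain b where b: "b \<in> E" "M n - \<delta> n \<le> xi n b" "M n - \<delta> n \<le> eta n b" using wit by blast
    have "q ^ Suc n * (M n - \<delta> n) = q ^ n * (real k * (M n - \<delta> n) + (real k - 1) * (M n - \<delta> n))"
      unfolding q_def by (simp add: algebra_simps)
    also have "\<dots> \<le> q ^ n * (real k * xi n b + (real k - 1) * eta n b)"
      using b k2 q_pos by (intro mult_left_mono add_mono) auto
    also have "\<dots> = ln (real (U (Suc n) b))"
      unfolding ln_U[OF b(1)] lnX lnY by (simp add: algebra_simps)
    also have "\<dots> \<le> ln (\<Sum>a\<in>E. real (U (Suc n) a))"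
      using finE b(1) U_pos by (intro ln_sum_ge) auto
    finally have "(M n - \<delta> n) * q ^ Suc n \<le> ln (\<Sum>a\<in>E. real (U (Suc n) a))" by (simp add: mult.commute)
    then show ?thesis unfolding f_def by (simp only: pos_le_divide_eq[OF qp])
  qed
  have hi: "f (Suc n) \<le> M n + c / q ^ Suc n" for n
  proof -
    have "ln (\<Sum>a\<in>E. real (U (Suc n) a)) \<le> ln (real (card E)) + q ^ Suc n * M n"
      using finE neE U_pos lnU_le by (intro ln_sum_le) auto
    then have "ln (\<Sum>a\<in>E. real (U (Suc n) a)) \<le> c + q ^ Suc n * M n" using c_le by linarith
    then show ?thesis unfolding f_def using qp[of n] q_pos by (simp add: field_simps del: power_Suc)
  qed
  have l1: "(\<lambda>n. M n - \<delta> n) \<longlonglongrightarrow> Ml - 0" using M_lim delta_lim by (rule tendsto_diff)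
  have l2: "(\<lambda>n. M n + c / q ^ Suc n) \<longlonglongrightarrow> Ml + 0"
    using M_lim LIMSEQ_Suc[OF pow_inv_zero] by (rule tendsto_add)
  have "(\<lambda>n. f (Suc n)) \<longlonglongrightarrow> Ml"
    by (rule sandwich_seq[of "\<lambda>n. M n - \<delta> n" "\<lambda>n. f (Suc n)" "\<lambda>n. M n + c / q ^ Suc n", OF lo hi])
       (use l1 l2 in simp_all)
  then have "f \<longlonglongrightarrow> Ml" by (simp add: filterlim_sequentially_Suc)
  then show ?thesis unfolding f_def .
qed

lemma lim_W: "(\<lambda>n. ln (\<Sum>a\<in>E. real (W n a)) / q ^ n) \<longlonglongrightarrow> Ml"
proof -
  define f where "f n = ln (\<Sum>a\<in>E. real (W n a)) / q ^ n" for n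
  have qp: "0 < q ^ Suc n" for n using q_pos by simp
  have lo: "M n - \<delta> n \<le> f (Suc n)" for n
  proof -
    obtain b where b: "b \<in> E" "M n - \<delta> n \<le> xi n b" "M n - \<delta> n \<le> eta n b" using wit by blast
    have "q ^ Suc n * (M n - \<delta> n) = q ^ n * ((real k - 1) * (M n - \<delta> n) + real k * (M n - \<delta> n))"
      unfolding q_def by (simp add: algebra_simps)
    also have "\<dots> \<le> q ^ n * ((real k - 1) * xi n b + real k * eta n b)"
      using b k2 q_pos by (intro mult_left_mono add_mono) auto
    also have "\<dots> = ln (real (W (Suc n) b))"
      unfolding ln_W[OF b(1)] lnX lnY by (simp add: algebra_simps)
    also have "\<dots> \<le> ln (\<Sum>a\<in>E. real (W (Suc n) a))"
      using finE b(1) W_pos by (intro ln_sum_ge) auto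
    finally have "(M n - \<delta> n) * q ^ Suc n \<le> ln (\<Sum>a\<in>E. real (W (Suc n) a))" by (simp add: mult.commute)
    then show ?thesis unfolding f_def by (simp only: pos_le_divide_eq[OF qp])
  qed
  have hi: "f (Suc n) \<le> M n + c / q ^ Suc n" for n
  proof -
    have "ln (\<Sum>a\<in>E. real (W (Suc n) a)) \<le> ln (real (card E)) + q ^ Suc n * M n"
      using finE neE W_pos lnW_le by (intro ln_sum_le) auto
    then have "ln (\<Sum>a\<in>E. real (W (Suc n) a)) \<le> c + q ^ Suc n * M n" using c_le by linarith
    then show ?thesis unfolding f_def using qp[of n] q_pos by (simp add: field_simps del: power_Suc)
  qed
  have l1: "(\<lambda>n. M n - \<delta> n) \<longlonglongrightarrow> Ml - 0" using M_lim delta_lim by (rule tendsto_diff)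
  have l2: "(\<lambda>n. M n + c / q ^ Suc n) \<longlonglongrightarrow> Ml + 0"
    using M_lim LIMSEQ_Suc[OF pow_inv_zero] by (rule tendsto_add)
  have "(\<lambda>n. f (Suc n)) \<longlonglongrightarrow> Ml"
    by (rule sandwich_seq[of "\<lambda>n. M n - \<delta> n" "\<lambda>n. f (Suc n)" "\<lambda>n. M n + c / q ^ Suc n", OF lo hi])
       (use l1 l2 in simp_all)
  then have "f \<longlonglongrightarrow> Ml" by (simp add: filterlim_sequentially_Suc)
  then show ?thesis unfolding f_def .
qed

lemma ln_XY: "a \<in> E \<Longrightarrow> ln (real (XX n a) ^ k * real (YY n a) ^ k) = q ^ n * (real k * xi n a + real k * eta n a)"
proof -
  assume a: "a \<in> E"
  have p: "0 < real (XX n a)" "0 < real (YY n a)" using XY_ge1[OF a, of n] by auto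
  then show ?thesis by (simp add: ln_mult ln_realpow lnX lnY algebra_simps)
qed

lemma lim_P: "(\<lambda>n. ln (\<Sum>a\<in>E. real (XX n a) ^ k * real (YY n a) ^ k) / q ^ n) \<longlonglongrightarrow> 2 * real k * Ml"
proof -
  define f where "f n = ln (\<Sum>a\<in>E. real (XX n a) ^ k * real (YY n a) ^ k) / q ^ n" for n
  have qp: "0 < q ^ n" for n using q_pos by simp
  have pos: "0 < real (XX n a) ^ k * real (YY n a) ^ k" if "a \<in> E" for a n
    using XY_ge1[OF that, of n] by simp
  have lo: "2 * real k * (M n - \<delta> n) \<le> f n" for n
  proof -
    obtain b where b: "b \<in> E" "M n - \<delta> n \<le> xi n b" "M n - \<delta> n \<le> eta n b" using wit by blast
    have "q ^ n * (2 * real k * (M n - \<delta> n)) = q ^ n * (real k * (M n - \<delta> n) + real k * (M n - \<delta> n))"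
      by (simp add: algebra_simps)
    also have "\<dots> \<le> q ^ n * (real k * xi n b + real k * eta n b)"
      using b k2 q_pos by (intro mult_left_mono add_mono) auto
    also have "\<dots> = ln (real (XX n b) ^ k * real (YY n b) ^ k)" by (rule ln_XY[OF b(1), symmetric])
    also have "\<dots> \<le> ln (\<Sum>a\<in>E. real (XX n a) ^ k * real (YY n a) ^ k)"
      using finE b(1) pos by (intro ln_sum_ge) auto
    finally have "(2 * real k * (M n - \<delta> n)) * q ^ n \<le> ln (\<Sum>a\<in>E. real (XX n a) ^ k * real (YY n a) ^ k)"
      by (simp add: mult.commute)
    then show ?thesis unfolding f_def by (simp only: pos_le_divide_eq[OF qp])
  qed
  have hi: "f n \<le> 2 * real k * M n + c / q ^ n" for n
  proof -
    have le: "ln (real (XX n a) ^ k * real (YY n a) ^ k) \<le> q ^ n * (2 * real k * M n)" if "a \<in> E" for a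
    proof -
      have "q ^ n * (real k * xi n a + real k * eta n a) \<le> q ^ n * (real k * M n + real k * M n)"
        using xi_le[OF that] eta_le[OF that] q_pos by (intro mult_left_mono add_mono) auto
      then show ?thesis unfolding ln_XY[OF that] by (simp add: algebra_simps)
    qed
    have "ln (\<Sum>a\<in>E. real (XX n a) ^ k * real (YY n a) ^ k) \<le> ln (real (card E)) + q ^ n * (2 * real k * M n)"
      using finE neE pos le by (intro ln_sum_le) auto
    then have "ln (\<Sum>a\<in>E. real (XX n a) ^ k * real (YY n a) ^ k) \<le> c + q ^ n * (2 * real k * M n)"
      using c_le by linarith
    then show ?thesis unfolding f_def using qp[of n] q_pos by (simp add: field_simps)
  qed
  have l1: "(\<lambda>n. 2 * real k * (M n - \<delta> n)) \<longlonglongrightarrow> 2 * real k * (Ml - 0)"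
    using M_lim delta_lim by (intro tendsto_mult tendsto_const tendsto_diff)
  have l2: "(\<lambda>n. 2 * real k * M n + c / q ^ n) \<longlonglongrightarrow> 2 * real k * Ml + 0"
    using M_lim pow_inv_zero by (intro tendsto_add tendsto_mult tendsto_const)
  have "f \<longlonglongrightarrow> 2 * real k * Ml"
    by (rule sandwich_seq[of "\<lambda>n. 2 * real k * (M n - \<delta> n)" f "\<lambda>n. 2 * real k * M n + c / q ^ n", OF lo hi])
       (use l1 l2 in simp_all)
  then show ?thesis unfolding f_def .
qed

end

lemma gsum: "1 < (q::real) \<Longrightarrow> (\<Sum>l\<le>n. q ^ l) = q ^ n * (q - inverse (q ^ n)) / (q - 1)"
proof -
  assume q: "1 < q"
  have "(\<Sum>l\<le>n. q ^ l) = (\<Sum>l<Suc n. q ^ l)" by (simp add: lessThan_Suc_atMost)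
  also have "\<dots> = (q ^ Suc n - 1) / (q - 1)" using q by (intro geometric_sum) simp
  also have "\<dots> = q ^ n * (q - inverse (q ^ n)) / (q - 1)" using q by (simp add: field_simps)
  finally show ?thesis .
qed

lemma inv_pow_lim: "1 < (q::real) \<Longrightarrow> (\<lambda>n. inverse (q ^ n)) \<longlonglongrightarrow> 0"
  by (rule LIMSEQ_inverse_realpow_zero)

lemma inv_pow_le: "1 < (q::real) \<Longrightarrow> inverse (q ^ n) \<le> 1"
  using one_le_power[of q n] by (simp add: inverse_le_1_iff)

lemma ratio1:
  assumes q: "3 \<le> (q::real)"
  shows "(\<lambda>n. q ^ n / (\<Sum>l\<le>n. q ^ l)) \<longlonglongrightarrow> (q - 1) / q"
proof -
  have q1: "1 < q" using q by simp
  have e: "q ^ n / (\<Sum>l\<le>n. q ^ l) = (q - 1) / (q - inverse (q ^ n))" for n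
  proof -
    have "inverse (q ^ n) \<le> 1" using inv_pow_le[OF q1] .
    then have "q - inverse (q ^ n) \<noteq> 0" using q by simp
    moreover have "q ^ n \<noteq> 0" using q by simp
    ultimately show ?thesis unfolding gsum[OF q1] using q by (simp add: field_simps)
  qed
  have "(\<lambda>n. (q - 1) / (q - inverse (q ^ n))) \<longlonglongrightarrow> (q - 1) / (q - 0)"
    using inv_pow_lim[OF q1] q by (intro tendsto_intros) auto
  then show ?thesis unfolding e by simp
qed

lemma ratio2:
  assumes q: "3 \<le> (q::real)" and K: "0 < K"
  shows "(\<lambda>n. q ^ n / (1 + K * (\<Sum>l\<le>n. q ^ l))) \<longlonglongrightarrow> (q - 1) / (K * q)"
proof -
  have q1: "1 < q" using q by simp
  have e: "q ^ n / (1 + K * (\<Sum>l\<le>n. q ^ l)) = (q - 1) / ((q - 1) * inverse (q ^ n) + K * (q - inverse (q ^ n)))" for n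
  proof -
    have "inverse (q ^ n) \<le> 1" using inv_pow_le[OF q1] .
    then have "0 < q - inverse (q ^ n)" using q by simp
    moreover have "0 < inverse (q ^ n)" using q by simp
    ultimately have "0 < (q - 1) * inverse (q ^ n) + K * (q - inverse (q ^ n))" using q K
      by (intro add_pos_pos mult_pos_pos) auto
    moreover have "q ^ n \<noteq> 0" using q by simp
    ultimately show ?thesis unfolding gsum[OF q1] using q by (simp add: field_simps)
  qed
  have "(\<lambda>n. (q - 1) / ((q - 1) * inverse (q ^ n) + K * (q - inverse (q ^ n)))) \<longlonglongrightarrow> (q - 1) / ((q - 1) * 0 + K * (q - 0))"
    using inv_pow_lim[OF q1] q K by (intro tendsto_intros) auto
  then show ?thesis unfolding e by simp
qed

theorem proposition4p5:
  fixes k :: nat and A :: "'a::finite \<Rightarrow> 'a \<Rightarrow> bool"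
  assumes "k \<ge> 2"
  defines "X \<equiv> markov_tree_shift k (AAt k A)"
  shows "\<exists>L. (\<lambda>n. ln (real (pcount k X (Delta k n))) / real (card (Delta k n))) \<longlonglongrightarrow> L
            \<and> (\<forall>i<2*k. stem_entropy k X i = ereal L)"
proof -
  interpret fs k A using assms(1) by unfold_locales
  have XX: "X = Xs" unfolding X_def Xs_def ..
  show ?thesis
  proof (cases "E = {}")
    case True
    have "Xs = {}" using True unfolding E_def by auto
    then have p0: "pcount k X H = 0" for H unfolding XX pcount_def by simp
    show ?thesis by (intro exI[of _ 0]) (simp add: p0 stem_entropy_def Limsup_const)
  next
    case False
    interpret an: an k A E
    proof
      show "2 \<le> k" using assms(1) .
      show "finite E" by simp
      show "E \<noteq> {}" using False .
      show "\<exists>b\<in>E. A a b" if "a \<in> E" for a using E_out[OF that, of 0] assms(1) by (simp add: AAt_def)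
      show "\<exists>c\<in>E. A c a" if "a \<in> E" for a using E_in[OF that, of 0] assms(1) by (simp add: AAt_def)
    qed
    define L where "L = an.Ml * (an.q - 1) / an.q"
    have q3: "3 \<le> an.q" by (rule an.q_gt)
    have qk: "real (2 * k - 1) = an.q" using assms(1) by (simp add: an.q_def)
    have sumq: "real (\<Sum>l\<le>n. (2 * k - 1) ^ l) = (\<Sum>l\<le>n. an.q ^ l)" for n
      by (simp add: qk[symmetric])
    have kpos: "0 < 2 * real k" using assms(1) by simp
    have ballS: "(\<lambda>n. ln (real (pcount k X (Delta k (Suc n)))) / real (card (Delta k (Suc n)))) \<longlonglongrightarrow> L"
    proof -
      have e: "ln (real (pcount k X (Delta k (Suc n)))) / real (card (Delta k (Suc n))) =
        (ln (\<Sum>a\<in>E. real (XX n a) ^ k * real (YY n a) ^ k) / an.q ^ n) *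
        (an.q ^ n / (1 + (2 * real k) * (\<Sum>l\<le>n. an.q ^ l)))" for n
      proof -
        have "real (pcount k X (Delta k (Suc n))) = (\<Sum>a\<in>E. real (XX n a) ^ k * real (YY n a) ^ k)"
          unfolding XX pcount_Delta[OF False] by simp
        moreover have "real (card (Delta k (Suc n))) = 1 + (2 * real k) * (\<Sum>l\<le>n. an.q ^ l)"
          unfolding card_Delta using sumq[of n] by simp
        moreover have "an.q ^ n \<noteq> 0" using q3 by simp
        ultimately show ?thesis by simp
      qed
      have "(\<lambda>n. (ln (\<Sum>a\<in>E. real (XX n a) ^ k * real (YY n a) ^ k) / an.q ^ n) *
        (an.q ^ n / (1 + (2 * real k) * (\<Sum>l\<le>n. an.q ^ l)))) \<longlonglongrightarrow> (2 * real k * an.Ml) * ((an.q - 1) / ((2 * real k) * an.q))"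
        by (intro tendsto_mult an.lim_P ratio2[OF q3 kpos])
      moreover have "(2 * real k * an.Ml) * ((an.q - 1) / ((2 * real k) * an.q)) = L"
        unfolding L_def using kpos q3 by (simp add: field_simps)
      ultimately show ?thesis unfolding e by simp
    qed
    have ball: "(\<lambda>n. ln (real (pcount k X (Delta k n))) / real (card (Delta k n))) \<longlonglongrightarrow> L"
      using ballS by (rule filterlim_sequentially_Suc[THEN iffD1])
    have stem: "stem_entropy k X i = ereal L" if i: "i < 2*k" for i
    proof -
      define F where "F n = (\<Sum>a\<in>E. if i < k then real (U n a) else real (W n a))" for n
      have FL: "(\<lambda>n. ln (F n) / an.q ^ n) \<longlonglongrightarrow> an.Ml"
        using an.lim_U an.lim_W unfolding F_def by (cases "i < k") simp_all
      have e: "ln (real (pcount k X (Delta_bar k [i] n))) / real (card (Delta_bar k [i] n)) =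
        (ln (F n) / an.q ^ n) * (an.q ^ n / (\<Sum>l\<le>n. an.q ^ l))" for n
      proof -
        have "real (pcount k X (Delta_bar k [i] n)) = F n"
          unfolding XX pcount_Dbar[OF i] F_def by (cases "i < k") (simp_all add: of_nat_sum)
        moreover have "real (card (Delta_bar k [i] n)) = (\<Sum>l\<le>n. an.q ^ l)"
          unfolding card_Dbar[OF i] using sumq[of n] by simp
        moreover have "an.q ^ n \<noteq> 0" using q3 by simp
        ultimately show ?thesis by simp
      qed
      have "(\<lambda>n. (ln (F n) / an.q ^ n) * (an.q ^ n / (\<Sum>l\<le>n. an.q ^ l))) \<longlonglongrightarrow> an.Ml * ((an.q - 1) / an.q)"
        by (intro tendsto_mult FL ratio1[OF q3])
      then have "(\<lambda>n. ln (real (pcount k X (Delta_bar k [i] n))) / real (card (Delta_bar k [i] n))) \<longlonglongrightarrow> L"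
        unfolding e L_def by simp
      then have "(\<lambda>n. ereal (ln (real (pcount k X (Delta_bar k [i] n))) / real (card (Delta_bar k [i] n)))) \<longlonglongrightarrow> ereal L"
        by (rule tendsto_ereal)
      then show ?thesis unfolding stem_entropy_def by (intro lim_imp_Limsup) simp_all
    qed
    show ?thesis using ball stem by blast
  qed
qed

end
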